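(* Let $P$ be a strict, monotone span program on $1+n$ input bits with inner product space $V=\mathbb{C}^{[d]}$ (with standard basis $\{\lvert l\rangle\}_{l\in[d]}$), target vector $\lvert t\rangle$, and input-vector index sets $I_{1,1},\dots,I_{1+n,1}$, where $\lvert I_{1,1}\rvert=1$. For $s_1,s_2>0$, let $P'$ be either $P_{\mathrm{AND}}(s_1,s_2)$ or $P_{\mathrm{OR}}(s_1,s_2)$, and let $Q^{r\otimes}$ be the reduced tensor-product composition of $P'$ into the first input of $P$. Then $$\bigl\lVert \mathrm{abs}\bigl(B_{Q^{r\otimes}}\bigr)\bigr\rVert^2 \;\le\; \frac{\sqrt{s_1}+\sqrt{s_2}}{\sqrt{s_1+s_2}}\,\bigl\lVert \mathrm{abs}\bigl(B_{P}\bigr)\bigr\rVert^2 .$$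
   Context: A strict, monotone span program $P$ on $N$ input bits consists of a finite-dimensional inner product space $V$ over $\mathbb{C}$, a target vector $\lvert t\rangle\in V$, pairwise disjoint finite index sets $I_{k,1}$ ($k\in[N]$), and input vectors $\lvert v_i\rangle\in V$ for $i\in\bigcup_k I_{k,1}$. It computes $f_P:\{0,1\}^N\to\{0,1\}$ with $f_P(x)=1$ iff $\lvert t\rangle\in\mathrm{Span}\{\lvert v_i\rangle: i\in I_{k,1},\,x_k=1\}$. For a span program with a fixed orthonormal basis of $V$, $B_P$ denotes the matrix (in that basis) whose first column is $\lvert t\rangle$ and whose remaining columns are the input vectors $\lvert v_i\rangle$, $i\in\bigcup_k I_{k,1}$ (this is the biadjacency matrix of the associated bipartite graph on input $1^N$). $\mathrm{abs}(M)$ is the entrywise absolute value of $M$ and $\lVert\cdot\rVert$ is the operator norm. $P_{\mathrm{AND}}(s_1,s_2)$: space $\mathbb{C}^2$, target $(\alpha_1,\alpha_2)^T$, input vectors $\lvert v_1\rangle=(\beta_1,0)^T$, $\lvert v_2\rangle=(0,\beta_2)^T$, with $I_{1,1}=\{1\}$, $I_{2,1}=\{2\}$. $P_{\mathrm{OR}}(s_1,s_2)$: space $\mathbb{C}$, target $\delta$, input vectors $\lvert v_1\rangle=\epsilon_1$, $\lvert v_2\rangle=\epsilon_2$, $I_{1,1}=\{1\}$, $I_{2,1}=\{2\}$. Here $\alpha_j=\epsilon_j=(s_j/(s_1+s_2))^{1/4}$, $\beta_j=1$, $\delta=1$; both use the standard basis. Reduced tensor-product composition of $P'$ (space $V'$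 with a fixed orthonormal basis, target $\lvert t'\rangle$, input vectors $\lvert v'_{i'}\rangle$, $i'\in I'_{k,1}$, $k\in[m]$) into the first input of $P$ (space $\mathbb{C}^{[d]}$): let $Z=\{l\in[d]:\langle l\vert v_i\rangle=0\ \forall i\in I_{1,1}\}$; for $l\in[d]$ let $V_l=V'$ and $\lvert\pi_l\rangle=\lvert t'\rangle$ if $l\notin Z$, and $V_l=\mathbb{C}$, $\lvert\pi_l\rangle=\lVert\lvert t'\rangle\rVert$ if $l\in Z$. The composed program $Q^{r\otimes}$ is strict and monotone on $m+n$ bits, with space $\bigoplus_{l\in[d]}V_l$ (basis the union of the bases of the summands), target $\sum_l\langle l\vert t\rangle\lvert\pi_l\rangle_{V_l}$, input index sets $I_{11}\times I'_{k1}$ for $k\le m$ with vectors $\lvert v_{(i,i')}\rangle=\sum_l\langle l\vert v_i\rangle\lvert v'_{i'}\rangle_{V_l}$, and index sets $I_{j1}$ for the remaining inputs ($k>m$, $j=k-m+1$) with vectors $\sum_l\langle l\vert v_\iota\rangle\lvert\pi_l\rangle_{V_l}$. *)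

theory Defs
  imports Complex_Main
begin

text \<open>A strict, monotone span program in coordinates: the inner product space is the
space of functions on a finite orthonormal basis sp_basis; the target vector and the input
vectors are given by their coordinates.  Every input vector index i belongs to exactly one
index set I_{k,1}, namely k = sp_owner P i (so the index sets are pairwise disjoint).
Strictness and monotonicity are built in (only sets I_{k,1} exist).\<close>

record ('b, 'i) span_program =
  sp_basis  :: "'b set"
  sp_target :: "'b \<Rightarrow> complex"
  sp_inputs :: "'i set"
  sp_vec    :: "'i \<Rightarrow> 'b \<Rightarrow> complex"
  sp_owner  :: "'i \<Rightarrow> nat"
  sp_nbits  :: nat

definition sp_wf :: "('b, 'i) span_program \<Rightarrow> bool" where
  "sp_wf P \<longleftrightarrow> finite (sp_basis P) \<and> finite (sp_inputs P) \<and>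
     (\<forall>i\<in>sp_inputs P. sp_owner P i \<in> {1..sp_nbits P})"

definition sp_I :: "('b, 'i) span_program \<Rightarrow> nat \<Rightarrow> 'i set" where
  "sp_I P k = {i \<in> sp_inputs P. sp_owner P i = k}"

definition sp_target_norm :: "('b, 'i) span_program \<Rightarrow> real" where
  "sp_target_norm P = sqrt (\<Sum>b\<in>sp_basis P. (cmod (sp_target P b))\<^sup>2)"

text \<open>The matrix B_P: rows indexed by sp_basis P, columns by None (target) and
Some i (input vector i).\<close>
definition sp_B :: "('b, 'i) span_program \<Rightarrow> 'b \<Rightarrow> 'i option \<Rightarrow> complex" where
  "sp_B P b c = (case c of None \<Rightarrow> sp_target P b | Some i \<Rightarrow> sp_vec P i b)"

definition sp_B_cols :: "('b, 'i) span_program \<Rightarrow> 'i option set" where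
  "sp_B_cols P = insert None (Some ` sp_inputs P)"

definition op_norm :: "'r set \<Rightarrow> 'c set \<Rightarrow> ('r \<Rightarrow> 'c \<Rightarrow> complex) \<Rightarrow> real" where
  "op_norm R C M = Sup {sqrt (\<Sum>r\<in>R. (cmod (\<Sum>c\<in>C. M r c * x c))\<^sup>2) | x.
                          (\<Sum>c\<in>C. (cmod (x c))\<^sup>2) \<le> 1}"

definition mat_abs :: "('r \<Rightarrow> 'c \<Rightarrow> complex) \<Rightarrow> 'r \<Rightarrow> 'c \<Rightarrow> complex" where
  "mat_abs M = (\<lambda>r c. complex_of_real (cmod (M r c)))"

text \<open>Reduced tensor-product composition of Pp into the first input of P.
Basis of the composed space: (l, Some a) for l not in Z and a a basis element of Pp
(the copy V_l = V'), and (l, None) for l in Z (the copy V_l = C).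
Input indices: Inl (i, i') for i in I_{1,1}, i' in I'_{k,1}, k \<le> m;
Inr iota for iota in I_{j,1}, j \<ge> 2 (new input number j + m - 1).
For l in Z the coefficient of v_i (i in I_{1,1}) vanishes, so its V_l-component is 0.\<close>
definition sp_Z :: "('b, 'i) span_program \<Rightarrow> 'b set" where
  "sp_Z P = {l \<in> sp_basis P. \<forall>i\<in>sp_I P 1. sp_vec P i l = 0}"

definition reduced_tensor_compose ::
  "('b, 'i) span_program \<Rightarrow> ('b2, 'i2) span_program
     \<Rightarrow> ('b \<times> 'b2 option, ('i \<times> 'i2) + 'i) span_program" where
  "reduced_tensor_compose P Pp =
     (let Z = sp_Z P; m = sp_nbits Pp; tn = complex_of_real (sp_target_norm Pp) in
      \<lparr> sp_basis = {(l, Some a) | l a. l \<in> sp_basis P \<and> l \<notin> Z \<and> a \<in> sp_basis Pp}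
                   \<union> {(l, None) | l. l \<in> Z},
        sp_target = (\<lambda>(l, ob). case ob of Some a \<Rightarrow> sp_target P l * sp_target Pp a
                                       | None \<Rightarrow> sp_target P l * tn),
        sp_inputs = Inl ` (sp_I P 1 \<times> {i' \<in> sp_inputs Pp. sp_owner Pp i' \<in> {1..m}})
                    \<union> Inr ` {i \<in> sp_inputs P. sp_owner P i \<ge> 2},
        sp_vec = (\<lambda>c (l, ob). case c of
                    Inl (i, i') \<Rightarrow> (case ob of Some a \<Rightarrow> sp_vec P i l * sp_vec Pp i' a
                                             | None \<Rightarrow> 0)
                  | Inr i \<Rightarrow> (case ob of Some a \<Rightarrow> sp_vec P i l * sp_target Pp a
                                     | None \<Rightarrow> sp_vec P i l * tn)),
        sp_owner = (\<lambda>c. case c of Inl (i, i') \<Rightarrow> sp_owner Pp i'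
                                | Inr i \<Rightarrow> sp_owner P i + m - 1),
        sp_nbits = m + sp_nbits P - 1 \<rparr>)"

definition P_AND :: "real \<Rightarrow> real \<Rightarrow> (nat, nat) span_program" where
  "P_AND s1 s2 =
     \<lparr> sp_basis = {0, 1},
       sp_target = (\<lambda>b. if b = 0 then complex_of_real (root 4 (s1 / (s1 + s2)))
                        else if b = 1 then complex_of_real (root 4 (s2 / (s1 + s2))) else 0),
       sp_inputs = {1, 2},
       sp_vec = (\<lambda>i b. if i = 1 \<and> b = 0 then 1 else if i = 2 \<and> b = 1 then 1 else 0),
       sp_owner = (\<lambda>i. i),
       sp_nbits = 2 \<rparr>"

definition P_OR :: "real \<Rightarrow> real \<Rightarrow> (nat, nat) span_program" where
  "P_OR s1 s2 =
     \<lparr> sp_basis = {0},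
       sp_target = (\<lambda>b. 1),
       sp_inputs = {1, 2},
       sp_vec = (\<lambda>i b. if i = 1 then complex_of_real (root 4 (s1 / (s1 + s2)))
                      else if i = 2 then complex_of_real (root 4 (s2 / (s1 + s2))) else 0),
       sp_owner = (\<lambda>i. i),
       sp_nbits = 2 \<rparr>"

end

theory Submission
  imports Defs
begin

lemma root4_sq: "0 \<le> x \<Longrightarrow> (root 4 x)\<^sup>2 = sqrt x"
proof -
  assume "0 \<le> x"
  have "root 4 x = root 2 (root 2 x)" using real_root_mult_exp[of 2 2 x] by simp
  then show ?thesis using \<open>0 \<le> x\<close> by (simp add: sqrt_def)
qed

lemma cs2: fixes a1 a2 y1 y2 :: real
  shows "a1*y1 + a2*y2 \<le> sqrt (a1\<^sup>2+a2\<^sup>2) * sqrt (y1\<^sup>2+y2\<^sup>2)"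
proof -
  have "(a1*y1 + a2*y2)\<^sup>2 \<le> (a1\<^sup>2+a2\<^sup>2) * (y1\<^sup>2+y2\<^sup>2)"
    using sum_squares_ge_zero[of "a1*y2 - a2*y1" 0] by (simp add: power2_eq_square algebra_simps)
  then have "\<bar>a1*y1 + a2*y2\<bar> \<le> sqrt ((a1\<^sup>2+a2\<^sup>2) * (y1\<^sup>2+y2\<^sup>2))"
    using real_le_rsqrt real_sqrt_abs by (metis real_sqrt_le_mono)
  then show ?thesis by (simp add: real_sqrt_mult)
qed

lemma cval:
  fixes s1 s2 :: real assumes "s1 > 0" "s2 > 0"
  defines "c \<equiv> (sqrt s1 + sqrt s2) / sqrt (s1 + s2)"
  shows "(root 4 (s1/(s1+s2)))\<^sup>2 + (root 4 (s2/(s1+s2)))\<^sup>2 = c" and "1 \<le> c"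
proof -
  show "(root 4 (s1/(s1+s2)))\<^sup>2 + (root 4 (s2/(s1+s2)))\<^sup>2 = c"
    using assms by (simp add: root4_sq real_sqrt_divide add_divide_distrib)
  have "sqrt (s1+s2) \<le> sqrt s1 + sqrt s2"
    using assms by (simp add: real_le_lsqrt sqrt_add_le_add_sqrt)
  moreover have "sqrt (s1+s2) > 0" using assms by simp
  ultimately show "1 \<le> c" unfolding c_def by simp
qed

definition nval :: "'r set \<Rightarrow> 'c set \<Rightarrow> ('r \<Rightarrow> 'c \<Rightarrow> complex) \<Rightarrow> ('c \<Rightarrow> complex) \<Rightarrow> real" where
  "nval R C M x = sqrt (\<Sum>r\<in>R. (cmod (\<Sum>c\<in>C. M r c * x c))\<^sup>2)"

lemma op_norm_alt: "op_norm R C M = Sup (nval R C M ` {x. (\<Sum>c\<in>C. (cmod (x c))\<^sup>2) \<le> 1})"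
  unfolding op_norm_def nval_def by (rule arg_cong[where f=Sup]) auto

lemma nval_bound:
  assumes "finite C" "(\<Sum>c\<in>C. (cmod (x c))\<^sup>2) \<le> 1"
  shows "nval R C M x \<le> sqrt (\<Sum>r\<in>R. (\<Sum>c\<in>C. cmod (M r c))\<^sup>2)"
proof -
  have xc: "cmod (x c) \<le> 1" if "c \<in> C" for c
  proof -
    have "(cmod (x c))\<^sup>2 \<le> (\<Sum>c\<in>C. (cmod (x c))\<^sup>2)"
      using assms(1) that by (intro member_le_sum) auto
    then have "(cmod (x c))\<^sup>2 \<le> 1\<^sup>2" using assms(2) by simp
    then show ?thesis by (simp add: power_le_one_iff abs_square_le_1)
  qed
  have "cmod (\<Sum>c\<in>C. M r c * x c) \<le> (\<Sum>c\<in>C. cmod (M r c))" for r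
  proof -
    have "cmod (\<Sum>c\<in>C. M r c * x c) \<le> (\<Sum>c\<in>C. cmod (M r c * x c))" by (rule norm_sum)
    also have "\<dots> \<le> (\<Sum>c\<in>C. cmod (M r c))"
      by (intro sum_mono) (auto simp: norm_mult intro: mult_left_le xc)
    finally show ?thesis .
  qed
  then have "(cmod (\<Sum>c\<in>C. M r c * x c))\<^sup>2 \<le> (\<Sum>c\<in>C. cmod (M r c))\<^sup>2" for r
    by (intro power_mono) auto
  then show ?thesis unfolding nval_def by (intro real_sqrt_le_mono sum_mono) auto
qed

lemma op_norm_upper:
  assumes "finite C" "(\<Sum>c\<in>C. (cmod (x c))\<^sup>2) \<le> 1"
  shows "nval R C M x \<le> op_norm R C M"
  unfolding op_norm_alt
  using assms by (intro cSup_upper bdd_aboveI2[where M="sqrt (\<Sum>r\<in>R. (\<Sum>c\<in>C. cmod (M r c))\<^sup>2)"])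
     (auto intro: nval_bound)

lemma op_norm_least:
  assumes "\<And>x. (\<Sum>c\<in>C. (cmod (x c))\<^sup>2) \<le> 1 \<Longrightarrow> nval R C M x \<le> K"
  shows "op_norm R C M \<le> K"
  unfolding op_norm_alt
proof (rule cSup_least)
  show "nval R C M ` {x. (\<Sum>c\<in>C. (cmod (x c))\<^sup>2) \<le> 1} \<noteq> {}"
    by (auto intro!: exI[of _ "\<lambda>_. 0"])
qed (use assms in auto)

lemma op_norm_nonneg_from:
  assumes "\<And>x. (\<Sum>c\<in>C. (cmod (x c))\<^sup>2) \<le> 1 \<Longrightarrow> nval R C M x \<le> K"
  shows "0 \<le> op_norm R C M"
proof -
  have "nval R C M (\<lambda>_. 0) \<le> op_norm R C M"
    unfolding op_norm_alt using assms
    by (intro cSup_upper bdd_aboveI2[where M=K]) auto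
  moreover have "nval R C M (\<lambda>_. 0) = 0" by (simp add: nval_def)
  ultimately show ?thesis by simp
qed

lemma main_bound:
  fixes P :: "(nat, 'i) span_program" and Pp :: "(nat, nat) span_program" and c :: real
  assumes wf: "sp_wf P" and I1: "sp_I P 1 = {i0}"
    and Ppin: "sp_inputs Pp = {1,2}" and Ppown: "sp_owner Pp = (\<lambda>i. i)" and Ppn: "sp_nbits Pp = 2"
    and Ppfin: "finite (sp_basis Pp)"
    and propA: "\<And>U W Y1 Y2. 0 \<le> U \<Longrightarrow> 0 \<le> W \<Longrightarrow> 0 \<le> Y1 \<Longrightarrow> 0 \<le> Y2 \<Longrightarrow>
        (\<Sum>a\<in>sp_basis Pp. (cmod (sp_target Pp a) * U + W * (cmod (sp_vec Pp 1 a) * Y1 + cmod (sp_vec Pp 2 a) * Y2))\<^sup>2)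
          \<le> c * (U + W * sqrt (Y1\<^sup>2 + Y2\<^sup>2))\<^sup>2"
    and propB: "(sp_target_norm Pp)\<^sup>2 \<le> c" and c0: "0 \<le> c"
    and xn: "(\<Sum>c\<in>sp_B_cols (reduced_tensor_compose P Pp). (cmod (x c))\<^sup>2) \<le> 1"
  shows "nval (sp_basis (reduced_tensor_compose P Pp)) (sp_B_cols (reduced_tensor_compose P Pp))
           (mat_abs (sp_B (reduced_tensor_compose P Pp))) x
         \<le> sqrt c * op_norm (sp_basis P) (sp_B_cols P) (mat_abs (sp_B P))"
proof -
  define Q where "Q = reduced_tensor_compose P Pp"
  define R where "R = {i \<in> sp_inputs P. sp_owner P i \<ge> 2}"
  define Z where "Z = sp_Z P"
  define tn where "tn = sp_target_norm Pp"
  have finB: "finite (sp_basis P)" and finI: "finite (sp_inputs P)"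
    and own: "\<And>i. i \<in> sp_inputs P \<Longrightarrow> sp_owner P i \<in> {1..sp_nbits P}"
    using wf by (auto simp: sp_wf_def)
  have i0in: "i0 \<in> sp_inputs P" "sp_owner P i0 = 1" using I1 by (auto simp: sp_I_def)
  have finR: "finite R" using finI by (simp add: R_def)
  have i0R: "i0 \<notin> R" using i0in by (simp add: R_def)
  have inP: "sp_inputs P = insert i0 R"
  proof -
    have "i \<in> R" if "i \<in> sp_inputs P" "i \<noteq> i0" for i
    proof -
      have "sp_owner P i \<noteq> 1" using that I1 by (auto simp: sp_I_def)
      then show ?thesis using own[OF that(1)] that(1) by (auto simp: R_def)
    qed
    then show ?thesis using i0in by (auto simp: R_def)
  qed
  have Zeq: "Z = {l \<in> sp_basis P. sp_vec P i0 l = 0}"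
    unfolding Z_def sp_Z_def I1 by simp
  have Jeq: "{i' \<in> sp_inputs Pp. sp_owner Pp i' \<in> {1..sp_nbits Pp}} = {1,2}"
    by (auto simp: Ppin Ppown Ppn)
  have inQ: "sp_inputs Q = Inl ` ({i0} \<times> {1,2}) \<union> Inr ` R"
    unfolding Q_def reduced_tensor_compose_def Let_def Jeq I1 R_def by simp
  have colsQ: "(\<Sum>c\<in>sp_B_cols Q. f c) = f None + f (Some (Inl (i0,1))) + f (Some (Inl (i0,2)))
      + (\<Sum>i\<in>R. f (Some (Inr i)))" for f :: "_ \<Rightarrow> real"
  proof -
    have "(\<Sum>c\<in>sp_B_cols Q. f c) = f None + (\<Sum>c\<in>sp_inputs Q. f (Some c))"
    proof -
      have "finite (sp_inputs Q)" using finR by (simp add: inQ)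
      then have "(\<Sum>c\<in>sp_B_cols Q. f c) = f None + (\<Sum>c\<in>Some ` sp_inputs Q. f c)"
        unfolding sp_B_cols_def by (subst sum.insert) auto
      also have "(\<Sum>c\<in>Some ` sp_inputs Q. f c) = (\<Sum>c\<in>sp_inputs Q. f (Some c))"
        by (simp add: sum.reindex)
      finally show ?thesis .
    qed
    also have "(\<Sum>c\<in>sp_inputs Q. f (Some c)) = (\<Sum>c\<in>Inl ` ({i0} \<times> {1,2}). f (Some c)) + (\<Sum>c\<in>Inr ` R. f (Some c))"
      unfolding inQ using finR by (intro sum.union_disjoint) auto
    also have "(\<Sum>c\<in>Inl ` ({i0} \<times> {1,2}). f (Some c)) = f (Some (Inl (i0,1))) + f (Some (Inl (i0,2)))"
      by (simp add: sum.reindex)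
    also have "(\<Sum>c\<in>Inr ` R. f (Some c)) = (\<Sum>i\<in>R. f (Some (Inr i)))"
      by (simp add: sum.reindex)
    finally show ?thesis by simp
  qed
  have colsP: "(\<Sum>c\<in>sp_B_cols P. g c) = g None + g (Some i0) + (\<Sum>i\<in>R. g (Some i))" for g :: "_ \<Rightarrow> 'z::comm_monoid_add"
  proof -
    have "sum g (insert (Some i0) (Some ` R)) = g (Some i0) + sum g (Some ` R)"
      using finR i0R by (subst sum.insert) auto
    moreover have "sum g (Some ` R) = (\<Sum>i\<in>R. g (Some i))" by (simp add: sum.reindex)
    ultimately show ?thesis unfolding sp_B_cols_def inP using finR i0R
      by (subst sum.insert) (auto simp: add.assoc)
  qed
  define X0 where "X0 = cmod (x None)"
  define Y1 where "Y1 = cmod (x (Some (Inl (i0,1))))"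
  define Y2 where "Y2 = cmod (x (Some (Inl (i0,2))))"
  define Xr where "Xr i = cmod (x (Some (Inr i)))" for i
  define Y where "Y = sqrt (Y1\<^sup>2 + Y2\<^sup>2)"
  define x' where "x' = (\<lambda>c. complex_of_real (case c of None \<Rightarrow> X0 | Some i \<Rightarrow> if i = i0 then Y else Xr i))"
  define U where "U l = cmod (sp_target P l) * X0 + (\<Sum>i\<in>R. cmod (sp_vec P i l) * Xr i)" for l
  define W where "W l = cmod (sp_vec P i0 l)" for l
  have pos: "0 \<le> X0" "0 \<le> Y1" "0 \<le> Y2" "0 \<le> Y" "\<And>i. 0 \<le> Xr i" "\<And>l. 0 \<le> U l" "\<And>l. 0 \<le> W l"
    by (auto simp: X0_def Y1_def Y2_def Y_def Xr_def U_def W_def intro!: sum_nonneg add_nonneg_nonneg)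
  have tn0: "0 \<le> tn" by (simp add: tn_def sp_target_norm_def sum_nonneg)
  have xn': "X0\<^sup>2 + Y1\<^sup>2 + Y2\<^sup>2 + (\<Sum>i\<in>R. (Xr i)\<^sup>2) \<le> 1"
    using xn unfolding Q_def[symmetric] colsQ by (simp add: X0_def Y1_def Y2_def Xr_def)
  have "(\<Sum>c\<in>sp_B_cols P. (cmod (x' c))\<^sup>2) = X0\<^sup>2 + Y\<^sup>2 + (\<Sum>i\<in>R. (Xr i)\<^sup>2)"
    unfolding colsP using i0R pos by (auto simp: x'_def intro!: sum.cong)
  also have "\<dots> \<le> 1" using xn' pos by (simp add: Y_def add.assoc)
  finally have opP: "nval (sp_basis P) (sp_B_cols P) (mat_abs (sp_B P)) x' \<le> op_norm (sp_basis P) (sp_B_cols P) (mat_abs (sp_B P))"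
    using finI by (intro op_norm_upper) (auto simp: sp_B_cols_def)
  have rowP: "(\<Sum>c\<in>sp_B_cols P. mat_abs (sp_B P) l c * x' c) = complex_of_real (U l + W l * Y)" for l
  proof -
    have "(\<Sum>i\<in>R. complex_of_real (cmod (sp_vec P i l)) * complex_of_real (if i = i0 then Y else Xr i))
       = (\<Sum>i\<in>R. complex_of_real (Xr i) * complex_of_real (cmod (sp_vec P i l)))"
      using i0R by (intro sum.cong) auto
    then show ?thesis unfolding colsP using i0R
    by (simp add: mat_abs_def sp_B_def x'_def U_def W_def of_real_sum algebra_simps)
  qed
  have nvP: "nval (sp_basis P) (sp_B_cols P) (mat_abs (sp_B P)) x' = sqrt (\<Sum>l\<in>sp_basis P. (U l + W l * Y)\<^sup>2)"
    unfolding nval_def rowP norm_of_real power2_abs by simp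
  define SQ where "SQ r = (\<Sum>c\<in>sp_B_cols Q. cmod (sp_B Q r c) * cmod (x c))" for r
  have nvQ: "nval (sp_basis Q) (sp_B_cols Q) (mat_abs (sp_B Q)) x \<le> sqrt (\<Sum>r\<in>sp_basis Q. (SQ r)\<^sup>2)"
  proof -
    have "cmod (\<Sum>c\<in>sp_B_cols Q. mat_abs (sp_B Q) r c * x c) \<le> SQ r" for r
    proof -
      have "cmod (\<Sum>c\<in>sp_B_cols Q. mat_abs (sp_B Q) r c * x c) \<le> (\<Sum>c\<in>sp_B_cols Q. cmod (mat_abs (sp_B Q) r c * x c))"
        by (rule norm_sum)
      also have "\<dots> = SQ r" by (simp add: SQ_def mat_abs_def norm_mult)
      finally show ?thesis .
    qed
    then show ?thesis unfolding nval_def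
      by (intro real_sqrt_le_mono sum_mono power_mono) auto
  qed
  have ZsubB: "Z \<subseteq> sp_basis P" by (auto simp: Zeq)
  have finZ: "finite Z" using finB ZsubB finite_subset by blast
  have bQ: "sp_basis Q = (\<lambda>(l,a). (l, Some a)) ` ((sp_basis P - Z) \<times> sp_basis Pp) \<union> (\<lambda>l. (l,None)) ` Z"
    unfolding Q_def reduced_tensor_compose_def Let_def Z_def[symmetric] by auto
  have sumQ: "(\<Sum>r\<in>sp_basis Q. F r) = (\<Sum>l\<in>sp_basis P - Z. \<Sum>a\<in>sp_basis Pp. F (l, Some a)) + (\<Sum>l\<in>Z. F (l, None))"
    for F :: "_ \<Rightarrow> real"
  proof -
    have "(\<Sum>r\<in>sp_basis Q. F r) = (\<Sum>r\<in>(\<lambda>(l,a). (l, Some a)) ` ((sp_basis P - Z) \<times> sp_basis Pp). F r)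
        + (\<Sum>r\<in>(\<lambda>l. (l,None)) ` Z. F r)"
      unfolding bQ using finB finZ Ppfin by (intro sum.union_disjoint) auto
    also have "(\<Sum>r\<in>(\<lambda>(l,a). (l, Some a)) ` ((sp_basis P - Z) \<times> sp_basis Pp). F r)
        = (\<Sum>(l,a)\<in>(sp_basis P - Z) \<times> sp_basis Pp. F (l, Some a))"
      by (subst sum.reindex) (auto simp: inj_on_def intro!: sum.cong split: prod.split)
    also have "\<dots> = (\<Sum>l\<in>sp_basis P - Z. \<Sum>a\<in>sp_basis Pp. F (l, Some a))"
      by (rule sum.cartesian_product[symmetric])
    also have "(\<Sum>r\<in>(\<lambda>l. (l,None)) ` Z. F r) = (\<Sum>l\<in>Z. F (l, None))"
      by (subst sum.reindex) (auto simp: inj_on_def)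
    finally show ?thesis .
  qed
  have SQs: "SQ (l, Some a) = cmod (sp_target Pp a) * U l + W l * (cmod (sp_vec Pp 1 a) * Y1 + cmod (sp_vec Pp 2 a) * Y2)" for l a
    unfolding SQ_def colsQ
    by (simp add: sp_B_def Q_def reduced_tensor_compose_def Let_def norm_mult U_def W_def X0_def Y1_def Y2_def Xr_def
        sum_distrib_left algebra_simps)
  have SQn: "SQ (l, None) = tn * U l" for l
    unfolding SQ_def colsQ using tn0
    by (simp add: sp_B_def Q_def reduced_tensor_compose_def Let_def norm_mult U_def X0_def Xr_def tn_def[symmetric]
        sum_distrib_left algebra_simps)
  have "(\<Sum>r\<in>sp_basis Q. (SQ r)\<^sup>2) \<le> (\<Sum>l\<in>sp_basis P - Z. c * (U l + W l * Y)\<^sup>2) + (\<Sum>l\<in>Z. c * (U l + W l * Y)\<^sup>2)"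
    unfolding sumQ
  proof (intro add_mono sum_mono)
    fix l assume "l \<in> sp_basis P - Z"
    show "(\<Sum>a\<in>sp_basis Pp. (SQ (l, Some a))\<^sup>2) \<le> c * (U l + W l * Y)\<^sup>2"
      unfolding SQs Y_def using pos by (intro propA) auto
  next
    fix l assume "l \<in> Z"
    then have "W l = 0" by (simp add: Zeq W_def)
    moreover have "(tn * U l)\<^sup>2 \<le> c * (U l)\<^sup>2"
      using propB by (simp add: power_mult_distrib tn_def mult_right_mono)
    ultimately show "(SQ (l, None))\<^sup>2 \<le> c * (U l + W l * Y)\<^sup>2" by (simp add: SQn)
  qed
  also have "\<dots> = c * (\<Sum>l\<in>sp_basis P. (U l + W l * Y)\<^sup>2)"
    using finB ZsubB by (simp add: sum_distrib_left[symmetric] sum.subset_diff[of Z "sp_basis P"] distrib_left)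
  finally have "sqrt (\<Sum>r\<in>sp_basis Q. (SQ r)\<^sup>2) \<le> sqrt c * nval (sp_basis P) (sp_B_cols P) (mat_abs (sp_B P)) x'"
    unfolding nvP real_sqrt_mult[symmetric] by (rule real_sqrt_le_mono)
  then show ?thesis unfolding Q_def[symmetric]
    using nvQ opP
    by (meson order_trans mult_left_mono real_sqrt_ge_zero c0)
qed

lemma p_bound:
  fixes q1 q2 Y1 Y2 c :: real
  assumes "q1\<^sup>2 + q2\<^sup>2 = c" "1 \<le> c"
  shows "q1*Y1 + q2*Y2 \<le> sqrt c * sqrt (Y1\<^sup>2 + Y2\<^sup>2)" "sqrt c \<le> c"
proof -
  show "q1*Y1 + q2*Y2 \<le> sqrt c * sqrt (Y1\<^sup>2 + Y2\<^sup>2)" using cs2[of q1 Y1 q2 Y2] assms by simp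
  have "sqrt c * 1 \<le> sqrt c * sqrt c" using assms by (intro mult_left_mono) auto
  then show "sqrt c \<le> c" using assms by simp
qed

lemma and_ineq:
  fixes q1 q2 U W Y1 Y2 c :: real
  assumes "0 \<le> U" "0 \<le> W" "q1\<^sup>2 + q2\<^sup>2 = c" "1 \<le> c"
  shows "(q1*U + W*Y1)\<^sup>2 + (q2*U + W*Y2)\<^sup>2 \<le> c * (U + W * sqrt (Y1\<^sup>2 + Y2\<^sup>2))\<^sup>2"
proof -
  define Y where "Y = sqrt (Y1\<^sup>2 + Y2\<^sup>2)"
  define p where "p = q1*Y1 + q2*Y2"
  have Y2e: "Y\<^sup>2 = Y1\<^sup>2 + Y2\<^sup>2" "0 \<le> Y" by (auto simp: Y_def)
  have "p \<le> sqrt c * Y" "sqrt c \<le> c" using p_bound[OF assms(3,4)] by (auto simp: p_def Y_def)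
  then have pc: "p \<le> c * Y" using Y2e(2) by (meson mult_right_mono order_trans)
  have uw: "0 \<le> U*W" using assms by simp
  have "(q1*U + W*Y1)\<^sup>2 + (q2*U + W*Y2)\<^sup>2 = c*U\<^sup>2 + 2*(U*W)*p + W\<^sup>2 * Y\<^sup>2"
    using Y2e by (simp add: p_def power2_eq_square algebra_simps flip: assms(3))
  also have "\<dots> \<le> c*U\<^sup>2 + 2*(U*W)*(c*Y) + c * (W\<^sup>2 * Y\<^sup>2)"
  proof -
    have "1 * (W\<^sup>2 * Y\<^sup>2) \<le> c * (W\<^sup>2 * Y\<^sup>2)" using assms(4) by (intro mult_right_mono) auto
    moreover have "2*(U*W)*p \<le> 2*(U*W)*(c*Y)" using pc uw by (intro mult_left_mono) auto
    ultimately show ?thesis by simp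
  qed
  also have "\<dots> = c * (U + W * Y)\<^sup>2" by (simp add: power2_eq_square algebra_simps)
  finally show ?thesis by (simp add: Y_def)
qed

lemma or_ineq:
  fixes q1 q2 U W Y1 Y2 c :: real
  assumes "0 \<le> U" "0 \<le> W" "q1\<^sup>2 + q2\<^sup>2 = c" "1 \<le> c" "0 \<le> q1" "0 \<le> q2" "0 \<le> Y1" "0 \<le> Y2"
  shows "(U + W*(q1*Y1 + q2*Y2))\<^sup>2 \<le> c * (U + W * sqrt (Y1\<^sup>2 + Y2\<^sup>2))\<^sup>2"
proof -
  define Y where "Y = sqrt (Y1\<^sup>2 + Y2\<^sup>2)"
  define p where "p = q1*Y1 + q2*Y2"
  have Y0: "0 \<le> Y" by (auto simp: Y_def)
  have p0: "0 \<le> p" using assms by (simp add: p_def)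
  have "p \<le> sqrt c * Y" "sqrt c \<le> c" using p_bound[OF assms(3,4)] by (auto simp: p_def Y_def)
  have sc: "1 \<le> sqrt c" using assms by simp
  have "1*U \<le> sqrt c * U" by (rule mult_right_mono[OF sc assms(1)])
  moreover have "W*p \<le> W * (sqrt c * Y)"
    using \<open>p \<le> sqrt c * Y\<close> assms by (intro mult_left_mono) auto
  ultimately have "U + W*p \<le> sqrt c * U + W * (sqrt c * Y)" by simp
  also have "\<dots> = sqrt c * (U + W*Y)" by (simp add: algebra_simps)
  finally have "(U + W*p)\<^sup>2 \<le> (sqrt c * (U + W*Y))\<^sup>2" using p0 assms by (intro power_mono) auto
  also have "\<dots> = c * (U + W*Y)\<^sup>2" using assms by (simp add: power_mult_distrib)
  finally show ?thesis by (simp add: Y_def p_def)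
qed

theorem lemma3p4:
  fixes P :: "(nat, 'i) span_program" and d n :: nat and s1 s2 :: real
    and Pp :: "(nat, nat) span_program"
  assumes "sp_wf P"
    and "sp_basis P = {0..<d}"
    and "sp_nbits P = 1 + n"
    and "card (sp_I P 1) = 1"
    and "s1 > 0" and "s2 > 0"
    and "Pp = P_AND s1 s2 \<or> Pp = P_OR s1 s2"
  shows "(op_norm (sp_basis (reduced_tensor_compose P Pp))
                  (sp_B_cols (reduced_tensor_compose P Pp))
                  (mat_abs (sp_B (reduced_tensor_compose P Pp))))\<^sup>2
         \<le> (sqrt s1 + sqrt s2) / sqrt (s1 + s2)
             * (op_norm (sp_basis P) (sp_B_cols P) (mat_abs (sp_B P)))\<^sup>2"
proof -
  obtain i0 where I1: "sp_I P 1 = {i0}" using assms(4) card_1_singletonE by blast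
  define c where "c = (sqrt s1 + sqrt s2) / sqrt (s1 + s2)"
  define q1 where "q1 = root 4 (s1 / (s1 + s2))"
  define q2 where "q2 = root 4 (s2 / (s1 + s2))"
  have cq: "q1\<^sup>2 + q2\<^sup>2 = c" "1 \<le> c" using cval[OF assms(5,6)] by (auto simp: q1_def q2_def c_def)
  have q0: "0 \<le> q1" "0 \<le> q2" using assms(5,6) by (auto simp: q1_def q2_def)
  define Q where "Q = reduced_tensor_compose P Pp"
  define opP where "opP = op_norm (sp_basis P) (sp_B_cols P) (mat_abs (sp_B P))"
  have bound: "nval (sp_basis Q) (sp_B_cols Q) (mat_abs (sp_B Q)) x \<le> sqrt c * opP"
    if xn: "(\<Sum>c\<in>sp_B_cols Q. (cmod (x c))\<^sup>2) \<le> 1" for x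
    using assms(7)
  proof
    assume Pp: "Pp = P_AND s1 s2"
    show ?thesis unfolding Q_def opP_def
    proof (rule main_bound[OF assms(1) I1])
      fix U W Y1 Y2 :: real assume h: "0 \<le> U" "0 \<le> W" "0 \<le> Y1" "0 \<le> Y2"
      show "(\<Sum>a\<in>sp_basis Pp. (cmod (sp_target Pp a) * U + W * (cmod (sp_vec Pp 1 a) * Y1 + cmod (sp_vec Pp 2 a) * Y2))\<^sup>2)
          \<le> c * (U + W * sqrt (Y1\<^sup>2 + Y2\<^sup>2))\<^sup>2"
        using and_ineq[OF h(1,2) cq, of Y1 Y2] q0
        by (simp add: Pp P_AND_def q1_def[symmetric] q2_def[symmetric])
    next
      show "(sp_target_norm Pp)\<^sup>2 \<le> c"
        using cq q0 by (simp add: Pp P_AND_def sp_target_norm_def q1_def[symmetric] q2_def[symmetric])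
    qed (use cq xn in \<open>auto simp: Pp P_AND_def Q_def\<close>)
  next
    assume Pp: "Pp = P_OR s1 s2"
    show ?thesis unfolding Q_def opP_def
    proof (rule main_bound[OF assms(1) I1])
      fix U W Y1 Y2 :: real assume h: "0 \<le> U" "0 \<le> W" "0 \<le> Y1" "0 \<le> Y2"
      show "(\<Sum>a\<in>sp_basis Pp. (cmod (sp_target Pp a) * U + W * (cmod (sp_vec Pp 1 a) * Y1 + cmod (sp_vec Pp 2 a) * Y2))\<^sup>2)
          \<le> c * (U + W * sqrt (Y1\<^sup>2 + Y2\<^sup>2))\<^sup>2"
        using or_ineq[OF h(1,2) cq q0 h(3,4)] q0
        by (simp add: Pp P_OR_def q1_def[symmetric] q2_def[symmetric])
    next
      show "(sp_target_norm Pp)\<^sup>2 \<le> c"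
        using cq by (simp add: Pp P_OR_def sp_target_norm_def)
    qed (use cq xn in \<open>auto simp: Pp P_OR_def Q_def\<close>)
  qed
  have le: "op_norm (sp_basis Q) (sp_B_cols Q) (mat_abs (sp_B Q)) \<le> sqrt c * opP"
    by (rule op_norm_least) (rule bound)
  have ge: "0 \<le> op_norm (sp_basis Q) (sp_B_cols Q) (mat_abs (sp_B Q))"
    by (rule op_norm_nonneg_from) (rule bound)
  have "(op_norm (sp_basis Q) (sp_B_cols Q) (mat_abs (sp_B Q)))\<^sup>2 \<le> (sqrt c * opP)\<^sup>2"
    using le ge by (rule power_mono)
  also have "\<dots> = c * opP\<^sup>2" using cq by (simp add: power_mult_distrib)
  finally show ?thesis by (simp add: Q_def opP_def c_def)
qed
end
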